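(* Let $(\mathcal T(n))_{n\in\mathbb N}$ be the triangle Markov chain obtained by iterated random barycentric subdivision started from an arbitrary triangle, and let $J_n=J(\mathcal T(n))$. Then almost surely $\limsup_{n\to\infty}J_n=+\infty$.
   Context: A triangle is given by three points of the plane which are not all equal. Barycentric subdivision: if a triangle has vertices $A,B,C$, let $D,E,F$ be the midpoints of $[A,B],[B,C],[C,A]$ and $G$ its barycenter; the medians cut it into the six triangles $\{A,D,G\},\{D,B,G\},\{B,E,G\},\{E,C,G\},\{C,F,G\},\{F,A,G\}$. The triangle Markov chain: $\mathcal T(0)$ is given and $\mathcal T(n+1)$ is chosen uniformly among the six triangles of the barycentric subdivision of $\mathcal T(n)$, independently of the past. For a triangle $\mathcal T$, $J(\mathcal T)\in(0,+\infty]$ is the sum of the squares of the lengths of its three edges divided by its area (with $J(\mathcal T)=+\infty$ iff $\mathcal T$ is flat, i.e. has zero area). *)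

theory Defs
  imports "HOL-Probability.Probability"
begin

type_synonym triangle = "complex \<times> complex \<times> complex"

definition nondegenerate_input :: "triangle \<Rightarrow> bool" where
  "nondegenerate_input T = (case T of (A, B, C) \<Rightarrow> \<not> (A = B \<and> B = C))"

text \<open>Area: half the absolute value of the cross product of B - A and C - A.\<close>
definition tri_area :: "triangle \<Rightarrow> real" where
  "tri_area T = (case T of (A, B, C) \<Rightarrow> \<bar>Im (cnj (B - A) * (C - A))\<bar> / 2)"

definition J :: "triangle \<Rightarrow> ereal" where
  "J T = (case T of (A, B, C) \<Rightarrow>
     (if tri_area T = 0 then \<infinity>
      else ereal (((cmod (B - A))\<^sup>2 + (cmod (C - B))\<^sup>2 + (cmod (A - C))\<^sup>2) / tri_area T)))"

definition subdiv :: "triangle \<Rightarrow> nat \<Rightarrow> triangle" where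
  "subdiv T i = (case T of (A, B, C) \<Rightarrow>
     (let D = (A + B) / 2; E = (B + C) / 2; F = (C + A) / 2; G = (A + B + C) / 3
      in [(A, D, G), (D, B, G), (B, E, G), (E, C, G), (C, F, G), (F, A, G)] ! i))"

text \<open>The triangle Markov chain, driven by an i.i.d. sequence of choices in {0..5}.\<close>
fun tri_chain :: "triangle \<Rightarrow> nat stream \<Rightarrow> nat \<Rightarrow> triangle" where
  "tri_chain T0 \<omega> 0 = T0"
| "tri_chain T0 \<omega> (Suc n) = subdiv (tri_chain T0 \<omega> n) (\<omega> !! n)"

definition choices :: "nat stream measure" where
  "choices = stream_space (measure_pmf (pmf_of_set {..<6::nat}))"

end

theory Submission imports Defs begin

abbreviation "U6 \<equiv> measure_pmf (pmf_of_set {..<6::nat})"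


lemma ps_choices: "prob_space choices"
  unfolding choices_def by (rule prob_space.prob_space_stream_space[OF prob_space_measure_pmf])

interpretation C: prob_space choices by (rule ps_choices)

lemma space_choices[simp]: "space choices = UNIV"
  unfolding choices_def by (simp add: space_stream_space)

lemma sets_choices_cong[measurable_cong]:
  "sets choices = sets (stream_space (count_space UNIV))"
  unfolding choices_def by (rule sets_stream_space_cong) simp

lemma prob_UNIV_choices[simp]: "C.prob UNIV = 1"
  using C.prob_space by simp

lemma prob_choices_Cons:
  assumes "Measurable.pred choices P"
  shows "\<P>(x in choices. P x) = (\<integral>\<^sup>+t. \<P>(x in choices. P (t ## x)) \<partial>U6)"
  using assms unfolding choices_def by (intro prob_space.prob_stream_space[OF prob_space_measure_pmf]) simp

lemma meas_stake: "Measurable.pred choices (\<lambda>\<omega>. P (stake n \<omega>))"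
  by measurable

lemma prod_lemma:
  assumes R[measurable]: "Measurable.pred choices R"
  shows "\<P>(\<omega> in choices. P (stake n \<omega>) \<and> R (sdrop n \<omega>)) =
    \<P>(\<omega> in choices. P (stake n \<omega>)) * \<P>(\<omega> in choices. R \<omega>)"
proof (induction n arbitrary: P)
  case 0
  show ?case by (cases "P []") auto
next
  case (Suc n)
  have "ennreal (\<P>(\<omega> in choices. P (stake (Suc n) \<omega>) \<and> R (sdrop (Suc n) \<omega>)))
      = (\<integral>\<^sup>+t. \<P>(x in choices. P (t # stake n x) \<and> R (sdrop n x)) \<partial>U6)"
    by (subst prob_choices_Cons) auto
  also have "\<dots> = (\<integral>\<^sup>+t. ennreal (\<P>(x in choices. P (t # stake n x))) * ennreal (\<P>(x in choices. R x)) \<partial>U6)"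
    using Suc[of "\<lambda>l. P (t # l)" for t] by (simp add: ennreal_mult)
  also have "\<dots> = (\<integral>\<^sup>+t. ennreal (\<P>(x in choices. P (t # stake n x))) \<partial>U6) * ennreal (\<P>(x in choices. R x))"
    by (rule nn_integral_multc) simp
  also have "\<dots> = ennreal (\<P>(\<omega> in choices. P (stake (Suc n) \<omega>))) * ennreal (\<P>(x in choices. R x))"
    by (subst prob_choices_Cons[of "\<lambda>\<omega>. P (stake (Suc n) \<omega>)"]) auto
  finally show ?case by (simp add: ennreal_mult[symmetric])
qed

definition good :: "nat \<Rightarrow> nat stream \<Rightarrow> bool" where
  "good n \<omega> = (\<forall>i<n. \<omega> !! i = 0)"

lemma good_Cons: "good (Suc n) (t ## x) = (t = 0 \<and> good n x)"
  unfolding good_def by (auto simp: less_Suc_eq_0_disj)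

lemma meas_good[measurable]: "Measurable.pred choices (good n)"
  unfolding good_def by measurable

lemma pmf6: "pmf (pmf_of_set {..<6::nat}) 0 = 1/6"
proof -
  have "(0::nat) \<in> {..<6}" by simp
  then have "{..<6::nat} \<noteq> {}" by blast
  then show ?thesis by (subst pmf_of_set) auto
qed

lemma events_good[simp]: "{x. \<forall>i<n. x !! i = 0} \<in> sets choices"
  using meas_good[of n] unfolding good_def pred_def by simp

lemma prob_good: "\<P>(\<omega> in choices. good n \<omega>) = (1/6) ^ n"
proof (induction n)
  case 0 then show ?case by (simp add: good_def)
next
  case (Suc n)
  have "ennreal (\<P>(\<omega> in choices. good (Suc n) \<omega>)) =
     (\<integral>\<^sup>+t. \<P>(x in choices. t = 0 \<and> good n x) \<partial>U6)"
    by (subst prob_choices_Cons) (auto simp: good_Cons)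
  also have "\<dots> = (\<integral>\<^sup>+t. ennreal ((1/6)^n) * indicator {0} t \<partial>U6)"
    by (intro nn_integral_cong) (auto simp: Suc[symmetric] split: split_indicator)
  also have "\<dots> = ennreal ((1/6)^n) * emeasure U6 {0}"
    by (subst nn_integral_cmult_indicator) auto
  also have "\<dots> = ennreal ((1/6)^Suc n)"
    by (simp add: emeasure_pmf_single ennreal_mult[symmetric] pmf6)
  finally show ?case by simp
qed

lemma good_stake: "good n \<omega> = (\<forall>i<n. stake n \<omega> ! i = 0)"
  unfolding good_def by (auto simp: stake_nth)

lemma null_never:
  "\<P>(\<omega> in choices. \<forall>j. \<not> good n (sdrop j \<omega>)) = 0"
proof -
  define R where "R \<omega> = (\<forall>j. \<not> good n (sdrop j \<omega>))" for \<omega>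
  have [measurable]: "Measurable.pred choices R" unfolding R_def by measurable
  have "\<P>(\<omega> in choices. R \<omega>) \<le> \<P>(\<omega> in choices. \<not> (\<forall>i<n. stake n \<omega> ! i = 0) \<and> R (sdrop n \<omega>))"
  proof (rule C.finite_measure_mono)
    show "{\<omega> \<in> space choices. R \<omega>} \<subseteq> {\<omega> \<in> space choices. \<not> (\<forall>i<n. stake n \<omega> ! i = 0) \<and> R (sdrop n \<omega>)}"
      unfolding R_def using good_stake
      by (auto simp: sdrop_add) (metis sdrop.simps(1))
    show "{\<omega> \<in> space choices. \<not> (\<forall>i<n. stake n \<omega> ! i = 0) \<and> R (sdrop n \<omega>)} \<in> sets choices"
      by measurable
  qed
  also have "\<dots> = \<P>(\<omega> in choices. \<not> (\<forall>i<n. stake n \<omega> ! i = 0)) * \<P>(\<omega> in choices. R \<omega>)"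
    by (rule prod_lemma) measurable
  also have "\<P>(\<omega> in choices. \<not> (\<forall>i<n. stake n \<omega> ! i = 0)) = 1 - (1/6)^n"
  proof -
    have "\<P>(\<omega> in choices. \<not> (\<forall>i<n. stake n \<omega> ! i = 0)) = 1 - \<P>(\<omega> in choices. good n \<omega>)"
      unfolding good_stake by (subst C.prob_neg) auto
    then show ?thesis using prob_good[of n] by simp
  qed
  finally have "(1/6)^n * \<P>(\<omega> in choices. R \<omega>) \<le> 0" by (simp add: algebra_simps)
  moreover have "(0::real) < (1/6)^n" by simp
  ultimately have "\<P>(\<omega> in choices. R \<omega>) \<le> 0"
    by (simp add: mult_le_0_iff)
  then show ?thesis unfolding R_def by (simp add: measure_nonneg antisym)
qed

lemma AE_ev_good: "AE \<omega> in choices. \<exists>j. good n (sdrop j \<omega>)"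
proof -
  have "emeasure choices {\<omega> \<in> space choices. \<not> (\<exists>j. good n (sdrop j \<omega>))} = 0"
    using null_never[of n] by (simp add: C.emeasure_eq_measure)
  then show ?thesis
    by (subst AE_iff_measurable[OF _ refl]) measurable
qed

lemma AE_sdrop:
  assumes [measurable]: "Measurable.pred choices P" and ae: "AE \<omega> in choices. P \<omega>"
  shows "AE \<omega> in choices. P (sdrop m \<omega>)"
proof (induction m)
  case 0 then show ?case using ae by simp
next
  case (Suc m)
  show ?case unfolding choices_def
    by (subst prob_space.AE_stream_space[OF prob_space_measure_pmf])
       (use Suc[unfolded choices_def] in auto)
qed

lemma AE_io_good: "AE \<omega> in choices. \<forall>m. \<exists>j. good n (sdrop (m + j) \<omega>)"
proof -
  have "AE \<omega> in choices. \<exists>j. good n (sdrop j (sdrop m \<omega>))" for m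
    by (rule AE_sdrop) (measurable, rule AE_ev_good)
  then show ?thesis by (simp add: AE_all_countable sdrop_add)
qed


definition vb :: "triangle \<Rightarrow> complex" where "vb T = fst (snd T) - fst T"
definition vc :: "triangle \<Rightarrow> complex" where "vc T = snd (snd T) - fst T"
definition sqs :: "triangle \<Rightarrow> real" where
  "sqs T = (case T of (A, B, C) \<Rightarrow> (cmod (B - A))\<^sup>2 + (cmod (C - B))\<^sup>2 + (cmod (A - C))\<^sup>2)"

lemma area_eq: "tri_area T = \<bar>Im (cnj (vb T) * vc T)\<bar> / 2"
  by (cases T) (auto simp: tri_area_def vb_def vc_def)

lemma J_eq: "tri_area T \<noteq> 0 \<Longrightarrow> J T = ereal (sqs T / tri_area T)"
  by (cases T) (auto simp: J_def sqs_def)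

lemma sqs_ge_both: "cmod (vb T)^2 \<le> sqs T \<and> cmod (vc T)^2 \<le> sqs T"
proof (cases T)
  case (fields A B C)
  have "cmod (A - C) = cmod (C - A)" by (simp add: norm_minus_commute)
  then show ?thesis
    using fields by (auto simp: sqs_def vb_def vc_def)
qed

lemmas sqs_ge = conjunct1[OF sqs_ge_both] conjunct2[OF sqs_ge_both]

definition cr :: "triangle \<Rightarrow> real" where "cr T = Im (cnj (vb T) * vc T)"

abbreviation f0 :: "triangle \<Rightarrow> triangle" where "f0 T \<equiv> subdiv T 0"

lemma f0_eq: "f0 (A, B, C) = (A, (A + B) / 2, (A + B + C) / 3)"
  by (simp add: subdiv_def Let_def)

lemma Im_aux: "Im (cnj (b / 2) * ((b + c) / 3)) = Im (cnj b * c) / 6"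
  by (simp add: algebra_simps)

lemma vb_f0: "vb (f0 T) = vb T / 2"
  by (cases T) (simp add: f0_eq vb_def field_simps)

lemma cr_f0: "cr (f0 T) = cr T / 6"
proof (cases T)
  case (fields A B C)
  have "vc (f0 T) = ((B - A) + (C - A)) / 3" "vb (f0 T) = (B - A) / 2"
    using fields by (simp_all add: f0_eq vb_def vc_def field_simps)
  then show ?thesis unfolding cr_def
    by (simp only: Im_aux) (simp add: fields vb_def vc_def)
qed

lemma vb_iter: "vb ((f0 ^^ n) T) = vb T / 2 ^ n"
  by (induction n) (simp_all add: vb_f0)

lemma cr_iter: "cr ((f0 ^^ n) T) = cr T / 6 ^ n"
  by (induction n) (simp_all add: cr_f0)

lemma key:
  assumes "tri_area T \<noteq> 0"
  shows "(sqs T / tri_area T) * (sqs ((f0 ^^ n) T) / tri_area ((f0 ^^ n) T)) \<ge> 4 * (3/2)^n"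
    and "tri_area ((f0 ^^ n) T) \<noteq> 0"
proof -
  define b where "b = vb T"
  define c where "c = vc T"
  define a where "a = tri_area T"
  have a: "a = \<bar>Im (cnj b * c)\<bar> / 2" unfolding a_def b_def c_def by (rule area_eq)
  have apos: "a > 0" using assms a_def a by auto
  have an: "tri_area ((f0 ^^ n) T) = a / 6 ^ n"
    using cr_iter[of n T] unfolding area_eq a cr_def by (simp add: b_def c_def)
  then show "tri_area ((f0 ^^ n) T) \<noteq> 0" using apos by simp
  have p4: "cmod ((2::complex)^n)^2 = 4^n"
  proof -
    have "cmod ((2::complex)^n)^2 = ((2::real)^n)^2" by (simp add: norm_power)
    also have "\<dots> = (2^2)^n" by (metis power_mult mult.commute)
    finally show ?thesis by simp
  qed
  have bn: "cmod (vb ((f0 ^^ n) T))^2 = cmod b ^ 2 / 4 ^ n"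
    using p4 by (simp add: vb_iter b_def norm_divide power_divide flip: power_mult_distrib)
  have ale: "2 * a \<le> cmod b * cmod c"
    using abs_Im_le_cmod[of "cnj b * c"] a by (simp add: norm_mult)
  have s1: "sqs T / a \<ge> cmod c ^ 2 / a"
    using sqs_ge(2)[of T] apos by (simp add: c_def divide_right_mono)
  have s2: "sqs ((f0 ^^ n) T) / (a / 6^n) \<ge> (cmod b ^ 2 / 4 ^ n) / (a / 6^n)"
    using sqs_ge(1)[of "(f0 ^^ n) T"] apos bn by (intro divide_right_mono) auto
  have eq: "(cmod b ^ 2 / 4 ^ n) / (a / 6^n) = cmod b ^ 2 * (3/2)^n / a"
    using apos by (simp add: field_simps power_divide flip: power_mult_distrib)
  have "4 * (3/2)^n \<le> (cmod c ^ 2 / a) * (cmod b ^ 2 * (3/2)^n / a)"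
  proof -
    have "(2*a)^2 \<le> (cmod b * cmod c)^2"
      using ale apos by (intro power_mono) auto
    then have "4 * a^2 \<le> cmod c ^ 2 * cmod b ^ 2" by (simp add: power_mult_distrib algebra_simps)
    then have "4 * a^2 * (3/2)^n \<le> cmod c ^ 2 * cmod b ^ 2 * (3/2)^n"
      by (intro mult_right_mono) auto
    then show ?thesis using apos by (simp add: field_simps power2_eq_square)
  qed
  also have "\<dots> \<le> (sqs T / a) * (sqs ((f0 ^^ n) T) / (a / 6^n))"
    using s1 s2 eq apos order_trans[OF _ s1, of 0] by (intro mult_mono) auto
  finally show "(sqs T / tri_area T) * (sqs ((f0 ^^ n) T) / tri_area ((f0 ^^ n) T)) \<ge> 4 * (3/2)^n"
    using an a_def by simp
qed


lemma chain_block: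
  "(\<forall>i<n. \<omega> !! (k + i) = 0) \<Longrightarrow> tri_chain T0 \<omega> (k + n) = (f0 ^^ n) (tri_chain T0 \<omega> k)"
  by (induction n) auto

lemma either:
  fixes M :: real
  assumes M: "M > 0" and n: "M^2 < 4 * (3/2)^n"
  shows "J T \<ge> ereal M \<or> J ((f0 ^^ n) T) \<ge> ereal M"
proof (cases "tri_area T = 0")
  case True then show ?thesis by (cases T) (simp add: J_def)
next
  case False
  define j0 where "j0 = sqs T / tri_area T"
  define jn where "jn = sqs ((f0 ^^ n) T) / tri_area ((f0 ^^ n) T)"
  have prod: "j0 * jn \<ge> 4 * (3/2)^n" using key(1)[OF False] unfolding j0_def jn_def .
  have nz: "tri_area ((f0 ^^ n) T) \<noteq> 0" using key(2)[OF False] .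
  have "tri_area T \<ge> 0" "tri_area ((f0 ^^ n) T) \<ge> 0" by (simp_all add: tri_area_def split: prod.splits)
  moreover have "sqs T \<ge> 0" "sqs ((f0 ^^ n) T) \<ge> 0" by (simp_all add: sqs_def split: prod.splits)
  ultimately have nn: "j0 \<ge> 0" "jn \<ge> 0" unfolding j0_def jn_def by simp_all
  have "j0 \<ge> M \<or> jn \<ge> M"
  proof (rule ccontr)
    assume "\<not> ?thesis"
    then have "j0 < M" "jn < M" by auto
    then have "j0 * jn < M * M" using nn M by (intro mult_strict_mono) auto
    then show False using prod n by (simp add: power2_eq_square)
  qed
  then show ?thesis using J_eq[OF False] J_eq[OF nz] unfolding j0_def jn_def by auto
qed

lemma limsup_infty:
  fixes X :: "nat \<Rightarrow> ereal"
  assumes "\<And>M N. M > 0 \<Longrightarrow> \<exists>k\<ge>N. X k \<ge> ereal M"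
  shows "limsup X = \<infinity>"
proof -
  have "(SUP m\<in>{N..}. X m) = \<infinity>" for N
    unfolding top_ereal_def[symmetric] SUP_eq_top_iff
  proof (intro allI impI)
    fix x :: ereal assume "x < top"
    then obtain r where r: "x < ereal r" using ereal_dense2[of x \<infinity>] by (auto simp: top_ereal_def)
    have "max 1 r > 0" by simp
    then obtain k where "k \<ge> N" "X k \<ge> ereal (max 1 r)" using assms[of "max 1 r" N] by blast
    moreover have "ereal r \<le> ereal (max 1 r)" by simp
    ultimately have "x < X k" using r by (meson less_le_trans order_trans)
    then show "\<exists>i\<in>{N..}. x < X i" using \<open>k \<ge> N\<close> by auto
  qed
  then show ?thesis unfolding limsup_INF_SUP by simp
qed

theorem proposition4:
  fixes T0 :: triangle
  assumes "nondegenerate_input T0"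
  shows "AE \<omega> in choices. limsup (\<lambda>n. J (tri_chain T0 \<omega> n)) = \<infinity>"
proof -
  have "AE \<omega> in choices. \<forall>n m. \<exists>j. good n (sdrop (m + j) \<omega>)"
    using AE_io_good by (simp add: AE_all_countable)
  then show ?thesis
  proof (rule AE_mp, intro AE_I2 impI)
    fix \<omega> assume H: "\<forall>n m. \<exists>j. good n (sdrop (m + j) \<omega>)"
    show "limsup (\<lambda>n. J (tri_chain T0 \<omega> n)) = \<infinity>"
    proof (rule limsup_infty)
      fix M :: real and N :: nat assume M: "M > 0"
      obtain n where n: "M^2 / 4 < (3/2::real)^n" using real_arch_pow[of "3/2" "M^2/4"] by auto
      then have n': "M^2 < 4 * (3/2)^n" by simp
      obtain j where "good n (sdrop (N + j) \<omega>)" using H by blast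
      then have blk: "\<forall>i<n. \<omega> !! (N + j + i) = 0" by (simp add: good_def sdrop_snth add.assoc)
      from either[OF M n', of "tri_chain T0 \<omega> (N + j)"] chain_block[OF blk, of T0]
      show "\<exists>k\<ge>N. J (tri_chain T0 \<omega> k) \<ge> ereal M"
        by (metis le_add1 trans_le_add1)
    qed
  qed
qed

end
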